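(* Let $0<\gamma_0\le\gamma_1$, $0<\eta\le1/\gamma_1$, let $\Sigma$ be symmetric positive definite with $\gamma_0I\preceq\Sigma^{-1}\preceq\gamma_1I$, and let $S$ be symmetric with $\gamma_0I\preceq S\preceq\gamma_1I$. Define $\Sigma'=(I-\eta S)\Sigma(I-\eta S)$ and $\Sigma''=\frac12\big(\Sigma'+2\eta I+[\Sigma'(\Sigma'+4\eta I)]^{1/2}\big)$. Then $$\gamma_1^{-1}I\preceq\Sigma''\preceq\gamma_0^{-1}I.$$ (Thus, at iteration $k$ of FB--GVI or Stochastic FB--GVI, if $\gamma_0I\preceq\Sigma_k^{-1}\preceq\gamma_1I$ and $\gamma_0I\preceq S_k\preceq\gamma_1I$, then $\gamma_1^{-1}I\preceq\Sigma_{k+1}\preceq\gamma_0^{-1}I$.)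
   Context: $[\cdot]^{1/2}$ is the principal positive semidefinite square root; $\Sigma'$ and $\Sigma'+4\eta I$ commute so their product is positive semidefinite. In FB--GVI/Stochastic FB--GVI the covariance update is $\Sigma_{k+1/2}=(I-\eta S_k)\Sigma_k(I-\eta S_k)$, $\Sigma_{k+1}=\frac12\big(\Sigma_{k+1/2}+2\eta I+[\Sigma_{k+1/2}(\Sigma_{k+1/2}+4\eta I)]^{1/2}\big)$, where $S_k=\mathbb E_{p_k}\nabla^2V$ (deterministic) or $S_k=\nabla^2V(\hat X_k)$ with $\hat X_k\sim p_k$ (stochastic). *)

theory Defs
  imports "HOL-Analysis.Analysis"
begin

definition sym_mat :: "real^'n^'n \<Rightarrow> bool" where
  "sym_mat A \<longleftrightarrow> transpose A = A"

definition psd_mat :: "real^'n^'n \<Rightarrow> bool" where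
  "psd_mat A \<longleftrightarrow> sym_mat A \<and> (\<forall>x. 0 \<le> x \<bullet> (A *v x))"

definition pd_mat :: "real^'n^'n \<Rightarrow> bool" where
  "pd_mat A \<longleftrightarrow> sym_mat A \<and> (\<forall>x. x \<noteq> 0 \<longrightarrow> 0 < x \<bullet> (A *v x))"

definition loewner_le :: "real^'n^'n \<Rightarrow> real^'n^'n \<Rightarrow> bool" where
  "loewner_le A B \<longleftrightarrow> psd_mat (B - A)"

definition psd_sqrt :: "real^'n^'n \<Rightarrow> real^'n^'n" where
  "psd_sqrt A = (THE B. psd_mat B \<and> B ** B = A)"

end

theory Submission
  imports Defs
begin

lemma mat_vec: "mat c *v x = c *\<^sub>R (x::real^'n)"
  by (simp add: vec_eq_iff matrix_vector_mult_def mat_def if_distribR if_distrib[of "\<lambda>z. z * _"] cong: if_cong)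

lemma sym_dot: "sym_mat A \<Longrightarrow> x \<bullet> (A *v y) = (A *v x) \<bullet> y"
  by (metis sym_mat_def dot_lmul_matrix transpose_matrix_vector)

lemma vec_eq_dot: "(\<And>y. (a::real^'n) \<bullet> y = b \<bullet> y) \<Longrightarrow> a = b"
  by (metis inner_diff_left inner_eq_zero_iff right_minus_eq)

lemma sym_matI: "(\<And>x y. x \<bullet> (A *v y) = (A *v x) \<bullet> (y::real^'n)) \<Longrightarrow> sym_mat A"
  unfolding sym_mat_def matrix_eq transpose_matrix_vector
  by (metis dot_lmul_matrix vec_eq_dot)

lemma qf_expand: "(x + t *\<^sub>R y) \<bullet> (A *v (x + t *\<^sub>R y)) =
   x \<bullet> (A *v x) + t * (x \<bullet> (A *v y)) + t * (y \<bullet> (A *v x)) + t\<^sup>2 * (y \<bullet> (A *v (y::real^'n)))"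
  by (simp add: matrix_vector_right_distrib matrix_vector_mult_scaleR inner_add_left inner_add_right algebra_simps power2_eq_square)

lemma small_contra:
  fixes a c :: real
  assumes "0 \<le> a" "\<And>t. 0 < t \<Longrightarrow> 2 * a \<le> t * c" shows "a = 0"
proof (rule ccontr)
  assume "a \<noteq> 0" hence a: "a > 0" using assms(1) by simp
  have "2 * a \<le> (a / (\<bar>c\<bar> + 1)) * c" using assms(2)[of "a / (\<bar>c\<bar>+1)"] a by simp
  also have "\<dots> = a * (c / (\<bar>c\<bar> + 1))" by simp
  also have "\<dots> \<le> a * 1" using a by (intro mult_left_mono) (auto simp: field_simps)
  finally show False using a by simp
qed

lemma psd_kernel:
  fixes P :: "real^'n^'n"
  assumes "sym_mat P" "\<And>z. 0 \<le> z \<bullet> (P *v z)" "x \<bullet> (P *v x) = 0"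
  shows "P *v x = 0"
proof -
  define y where "y = P *v x"
  have "y \<bullet> y = 0"
  proof (rule small_contra)
    show "0 \<le> y \<bullet> y" by simp
    fix t :: real assume "0 < t"
    have "0 \<le> (x + (-t) *\<^sub>R y) \<bullet> (P *v (x + (-t) *\<^sub>R y))" by (rule assms(2))
    also have "\<dots> = - 2 * t * (y \<bullet> y) + t\<^sup>2 * (y \<bullet> (P *v y))"
      unfolding qf_expand assms(3) using sym_dot[OF assms(1), of x y] 
      by (simp add: y_def inner_commute power2_eq_square)
    finally have "2 * t * (y \<bullet> y) \<le> t * (t * (y \<bullet> (P *v y)))" by (simp add: power2_eq_square)
    thus "2 * (y \<bullet> y) \<le> t * (y \<bullet> (P *v y))" using \<open>0<t\<close> by simp
  qed
  thus ?thesis by (simp add: y_def)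
qed


definition ONB :: "(real^'n) set \<Rightarrow> bool" where
  "ONB V \<longleftrightarrow> finite V \<and> pairwise orthogonal V \<and> (\<forall>v\<in>V. norm v = 1) \<and>
     (\<forall>x. x = (\<Sum>v\<in>V. (v \<bullet> x) *\<^sub>R v))"

definition opV :: "(real^'n) set \<Rightarrow> (real^'n \<Rightarrow> real) \<Rightarrow> real^'n^'n" where
  "opV V g = matrix (\<lambda>x. \<Sum>v\<in>V. (g v * (v \<bullet> x)) *\<^sub>R v)"

lemma ON_dot:
  assumes "finite V" "pairwise orthogonal V" "\<forall>v\<in>V. norm v = 1" "u \<in> V"
  shows "u \<bullet> (\<Sum>v\<in>V. c v *\<^sub>R v) = c u"
proof -
  have "u \<bullet> (\<Sum>v\<in>V. c v *\<^sub>R v) = (\<Sum>v\<in>V. c v * (u \<bullet> v))" by (simp add: inner_sum_right)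
  also have "\<dots> = c u * (u \<bullet> u) + (\<Sum>v\<in>V-{u}. c v * (u \<bullet> v))"
    using assms by (simp add: sum.remove)
  also have "(\<Sum>v\<in>V-{u}. c v * (u \<bullet> v)) = 0"
    using assms(2,4) by (intro sum.neutral) (auto simp: pairwise_def orthogonal_def)
  also have "u \<bullet> u = 1" using assms(3,4) by (metis norm_eq_1)
  finally show ?thesis by simp
qed

lemma opV_apply: "opV V g *v x = (\<Sum>v\<in>V. (g v * (v \<bullet> x)) *\<^sub>R v)"
proof -
  have "linear (\<lambda>x. \<Sum>v\<in>V. (g v * (v \<bullet> x)) *\<^sub>R v)"
    by (rule linearI) (auto simp: inner_add_right distrib_left scaleR_add_left sum.distrib scaleR_sum_right mult_ac)
  thus ?thesis unfolding opV_def by (simp add: matrix_vector_mul(2))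
qed

lemma ONB_dot: "ONB V \<Longrightarrow> u \<in> V \<Longrightarrow> u \<bullet> (\<Sum>v\<in>V. c v *\<^sub>R v) = c u"
  unfolding ONB_def using ON_dot by blast

lemma opV_vec: "ONB V \<Longrightarrow> u \<in> V \<Longrightarrow> opV V g *v u = g u *\<^sub>R u"
proof -
  assume a: "ONB V" "u \<in> V"
  have "opV V g *v u = (\<Sum>v\<in>V. (g v * (v \<bullet> u)) *\<^sub>R v)" by (rule opV_apply)
  also have "\<dots> = (\<Sum>v\<in>V. (if v = u then g u else 0) *\<^sub>R v)"
  proof (rule sum.cong)
    fix v assume "v \<in> V"
    show "(g v * (v \<bullet> u)) *\<^sub>R v = (if v = u then g u else 0) *\<^sub>R v"
      using a \<open>v\<in>V\<close> unfolding ONB_def pairwise_def orthogonal_def by (auto simp: norm_eq_1)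
  qed simp
  also have "\<dots> = g u *\<^sub>R u" using a by (simp add: if_distrib[of "\<lambda>z. z *\<^sub>R _"] ONB_def cong: if_cong)
  finally show ?thesis .
qed

lemma opV_eq:
  assumes "ONB V" "\<And>u. u \<in> V \<Longrightarrow> A *v u = g u *\<^sub>R u"
  shows "A = opV V g"
  unfolding matrix_eq
proof
  fix x
  have "A *v x = A *v (\<Sum>v\<in>V. (v \<bullet> x) *\<^sub>R v)" using assms(1) unfolding ONB_def by metis
  also have "\<dots> = (\<Sum>v\<in>V. (v \<bullet> x) *\<^sub>R (A *v v))" by (simp add: vec.sum matrix_vector_mult_scaleR)
  also have "\<dots> = opV V g *v x" unfolding opV_apply using assms(2)
    by (intro sum.cong) (auto simp: mult.commute)
  finally show "A *v x = opV V g *v x" .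
qed

lemma opV_mult: "ONB V \<Longrightarrow> opV V g ** opV V h = opV V (\<lambda>v. g v * h v)"
  by (rule opV_eq) (auto simp: matrix_vector_mul_assoc[symmetric] opV_vec matrix_vector_mult_scaleR)

lemma opV_qf: "ONB V \<Longrightarrow> x \<bullet> (opV V g *v x) = (\<Sum>v\<in>V. g v * (v \<bullet> x)\<^sup>2)"
  by (simp add: opV_apply inner_sum_right power2_eq_square mult.assoc inner_commute)

lemma ONB_norm: "ONB V \<Longrightarrow> x \<bullet> x = (\<Sum>v\<in>V. (v \<bullet> x)\<^sup>2)"
  using opV_qf[of V x "\<lambda>_. 1"] opV_eq[of V "mat 1" "\<lambda>_. 1"] by simp

lemma opV_sym: "sym_mat (opV V g)"
  by (rule sym_matI) (simp add: opV_apply inner_sum_right inner_sum_left mult_ac inner_commute)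

lemma opV_psd: "ONB V \<Longrightarrow> (\<And>v. v \<in> V \<Longrightarrow> 0 \<le> g v) \<Longrightarrow> psd_mat (opV V g)"
  unfolding psd_mat_def by (simp add: opV_sym opV_qf sum_nonneg)


lemma qf_scale: "(c *\<^sub>R x) \<bullet> (A *v (c *\<^sub>R x)) = c\<^sup>2 * (x \<bullet> (A *v (x::real^'n)))"
  by (simp add: matrix_vector_mult_scaleR power2_eq_square)

lemma spectral_aux:
  fixes A :: "real^'n^'n"
  assumes sym: "sym_mat A"
  shows "k \<le> DIM(real^'n) \<Longrightarrow> \<exists>V. finite V \<and> card V = k \<and> (\<forall>v\<in>V. norm v = 1 \<and> A *v v = (v \<bullet> (A *v v)) *\<^sub>R v) \<and> pairwise orthogonal V"
proof (induction k)
  case 0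
  then show ?case by (intro exI[of _ "{}"]) auto
next
  case (Suc k)
  then obtain V where V: "finite V" "card V = k" "\<forall>v\<in>V. norm v = 1 \<and> A *v v = (v \<bullet> (A *v v)) *\<^sub>R v"
      "pairwise orthogonal V" by auto
  have dV: "dim V < DIM(real^'n)" using dim_le_card'[OF V(1)] V(2) Suc(2) by simp
  obtain u :: "real^'n" where u: "u \<noteq> 0" "\<And>y. y \<in> span V \<Longrightarrow> orthogonal u y"
    using orthogonal_to_subspace_exists[OF dV] by metis
  define K where "K = sphere (0::real^'n) 1 \<inter> (\<Inter>v\<in>V. {x. v \<bullet> x = 0})"
  have "compact K" unfolding K_def
    by (intro compact_Int_closed compact_sphere closed_INT closed_hyperplane ballI)
  have cK: "compact K" by fact
  have "(1 / norm u) *\<^sub>R u \<in> K" using u unfolding K_def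
    by (auto simp: orthogonal_def span_base inner_commute)
  hence neK: "K \<noteq> {}" by auto
  have cont: "continuous_on K (\<lambda>x. x \<bullet> (A *v x))"
    by (intro continuous_intros linear_continuous_on matrix_vector_mul_bounded_linear)
  obtain w where w: "w \<in> K" "\<And>y. y \<in> K \<Longrightarrow> y \<bullet> (A *v y) \<le> w \<bullet> (A *v w)"
    using continuous_attains_sup[OF cK neK cont] by blast
  define l where "l = w \<bullet> (A *v w)"
  have wn: "norm w = 1" and wV: "\<And>v. v \<in> V \<Longrightarrow> v \<bullet> w = 0" using w(1) unfolding K_def by auto
  have ww: "w \<bullet> w = 1" using wn by (simp add: norm_eq_1)
  have maxi: "y \<bullet> (A *v y) \<le> l * (y \<bullet> y)" if "\<And>v. v \<in> V \<Longrightarrow> v \<bullet> y = 0" for y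
  proof (cases "y = 0")
    case True then show ?thesis by simp
  next
    case False
    have "(1 / norm y) *\<^sub>R y \<in> K" using False that unfolding K_def by auto
    from w(2)[OF this] have "(1 / norm y)\<^sup>2 * (y \<bullet> (A *v y)) \<le> l"
      unfolding qf_scale l_def .
    moreover have "(1 / norm y)\<^sup>2 = 1 / (y \<bullet> y)" by (simp add: power2_norm_eq_inner[symmetric] power_divide)
    moreover have "y \<bullet> y > 0" using False by simp
    ultimately show ?thesis by (simp add: field_simps)
  qed
  define r where "r = A *v w - l *\<^sub>R w"
  have rV: "v \<bullet> r = 0" if "v \<in> V" for v
  proof -
    have "v \<bullet> (A *v w) = (A *v v) \<bullet> w" by (rule sym_dot[OF sym])
    also have "\<dots> = 0"
    proof -
      have "A *v v = (v \<bullet> (A *v v)) *\<^sub>R v" using V(3) that by blast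
      hence "(A *v v) \<bullet> w = (v \<bullet> (A *v v)) * (v \<bullet> w)" by (metis inner_scaleR_left)
      thus ?thesis using wV[OF that] by simp
    qed
    finally show ?thesis using wV[OF that] by (simp add: r_def inner_diff_right)
  qed
  have rw: "w \<bullet> r = 0" using ww by (simp add: r_def inner_diff_right l_def)
  have Awr: "w \<bullet> (A *v r) = r \<bullet> r" "r \<bullet> (A *v w) = r \<bullet> r"
  proof -
    have "r \<bullet> (A *v w) = r \<bullet> (r + l *\<^sub>R w)" by (simp add: r_def)
    also have "\<dots> = r \<bullet> r" using rw by (simp add: inner_add_right inner_commute)
    finally show "r \<bullet> (A *v w) = r \<bullet> r" .
    thus "w \<bullet> (A *v r) = r \<bullet> r" using sym_dot[OF sym, of w r] by (simp add: inner_commute)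
  qed
  have "r \<bullet> r = 0"
  proof (rule small_contra)
    show "0 \<le> r \<bullet> r" by simp
    fix t :: real assume "0 < t"
    have "(w + t *\<^sub>R r) \<bullet> (A *v (w + t *\<^sub>R r)) \<le> l * ((w + t *\<^sub>R r) \<bullet> (w + t *\<^sub>R r))"
      by (rule maxi) (simp add: inner_add_right wV rV)
    hence "l + 2 * t * (r \<bullet> r) + t\<^sup>2 * (r \<bullet> (A *v r)) \<le> l * (1 + t\<^sup>2 * (r \<bullet> r))"
      unfolding qf_expand Awr using rw ww
      by (simp add: l_def inner_add_left inner_add_right inner_commute power2_eq_square algebra_simps)
    hence "2 * t * (r \<bullet> r) \<le> t * (t * (l * (r \<bullet> r) - r \<bullet> (A *v r)))"
      by (simp add: power2_eq_square algebra_simps)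
    thus "2 * (r \<bullet> r) \<le> t * (l * (r \<bullet> r) - r \<bullet> (A *v r))" using \<open>0<t\<close> by simp
  qed
  hence eig: "A *v w = l *\<^sub>R w" by (simp add: r_def)
  have wnot: "w \<notin> V" using wV ww by force
  show ?case
  proof (intro exI[of _ "insert w V"] conjI)
    show "finite (insert w V)" using V by simp
    show "card (insert w V) = Suc k" using V wnot by simp
    show "\<forall>v\<in>insert w V. norm v = 1 \<and> A *v v = (v \<bullet> (A *v v)) *\<^sub>R v"
      using V(3) wn eig by (simp add: l_def)
    show "pairwise orthogonal (insert w V)" using V(4) wV
      by (auto simp: pairwise_insert orthogonal_def inner_commute)
  qed
qed

lemma spectral:
  fixes A :: "real^'n^'n"
  assumes "sym_mat A"
  shows "\<exists>V. ONB V \<and> (\<forall>v\<in>V. A *v v = (v \<bullet> (A *v v)) *\<^sub>R v)"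
proof -
  obtain V where V: "finite V" "card V = DIM(real^'n)" "\<forall>v\<in>V. norm v = 1 \<and> A *v v = (v \<bullet> (A *v v)) *\<^sub>R v"
      "pairwise orthogonal V" using spectral_aux[OF assms, of "DIM(real^'n)"] by auto
  have "0 \<notin> V" using V(3) by force
  hence ind: "independent V" using V(4) pairwise_orthogonal_independent by blast
  have "span V = UNIV" using dim_eq_card_independent[OF ind] V(2) dim_eq_full by metis
  have "x = (\<Sum>v\<in>V. (v \<bullet> x) *\<^sub>R v)" for x
  proof -
    define r where "r = x - (\<Sum>v\<in>V. (v \<bullet> x) *\<^sub>R v)"
    have "orthogonal r u" if "u \<in> V" for u
    proof -
      have "u \<bullet> (\<Sum>v\<in>V. (v \<bullet> x) *\<^sub>R v) = u \<bullet> x"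
        using ON_dot[of V u "\<lambda>v. v \<bullet> x"] V that by simp
      hence "(\<Sum>v\<in>V. (v \<bullet> x) *\<^sub>R v) \<bullet> u = x \<bullet> u" by (metis inner_commute)
      thus ?thesis unfolding r_def orthogonal_def by (simp add: inner_diff_left)
    qed
    hence "orthogonal r r" using orthogonal_to_span \<open>span V = UNIV\<close> by blast
    thus ?thesis by (simp add: r_def orthogonal_def)
  qed
  thus ?thesis using V unfolding ONB_def by blast
qed


lemma sym_diff: "sym_mat A \<Longrightarrow> sym_mat B \<Longrightarrow> sym_mat (A - B :: real^'n^'n)"
  by (rule sym_matI) (simp add: matrix_vector_mult_diff_rdistrib inner_diff_right inner_diff_left sym_dot)

lemma psd_sqrt_unique:
  fixes B C :: "real^'n^'n"
  assumes B: "psd_mat B" and C: "psd_mat C" and eq: "B ** B = C ** C"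
  shows "B = C"
proof -
  have sB: "sym_mat B" and pB: "\<And>x. 0 \<le> x \<bullet> (B *v x)" using B unfolding psd_mat_def by auto
  have sC: "sym_mat C" and pC: "\<And>x. 0 \<le> x \<bullet> (C *v x)" using C unfolding psd_mat_def by auto
  define D where "D = B - C"
  have "sym_mat D" unfolding D_def by (rule sym_diff[OF sB sC])
  then obtain V where V: "ONB V" "\<forall>v\<in>V. D *v v = (v \<bullet> (D *v v)) *\<^sub>R v" using spectral by blast
  have ev0: "D *v u = 0" if u: "u \<in> V" for u
  proof -
    define m where "m = u \<bullet> (D *v u)"
    have Du: "D *v u = m *\<^sub>R u" using V u by (simp add: m_def)
    have un: "u \<noteq> 0" using V u unfolding ONB_def by force
    have Bu: "B *v u = C *v u + m *\<^sub>R u" using Du by (simp add: D_def matrix_vector_mult_diff_rdistrib algebra_simps)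
    have "u \<bullet> (B *v (B *v u)) = u \<bullet> (C *v (C *v u))"
      using eq by (simp add: matrix_vector_mul_assoc)
    moreover have "u \<bullet> (B *v (B *v u)) = (B *v u) \<bullet> (B *v u)" by (rule sym_dot[OF sB])
    moreover have "u \<bullet> (C *v (C *v u)) = (C *v u) \<bullet> (C *v u)" by (rule sym_dot[OF sC])
    moreover have "(B *v u) \<bullet> (B *v u) = (B *v u) \<bullet> (C *v u) + m * (u \<bullet> (B *v u))"
      by (subst (2) Bu) (simp add: inner_add_right inner_commute)
    moreover have "(B *v u) \<bullet> (C *v u) = (C *v u) \<bullet> (C *v u) + m * (u \<bullet> (C *v u))"
    proof -
      have "(B *v u) \<bullet> (C *v u) = (C *v u + m *\<^sub>R u) \<bullet> (C *v u)" using Bu by simp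
      also have "\<dots> = (C *v u) \<bullet> (C *v u) + m * (u \<bullet> (C *v u))" by (simp add: inner_add_left)
      finally show ?thesis .
    qed
    ultimately have "m * (u \<bullet> (B *v u) + u \<bullet> (C *v u)) = 0" by (simp add: algebra_simps)
    hence "m = 0 \<or> (u \<bullet> (B *v u) = 0 \<and> u \<bullet> (C *v u) = 0)" using pB[of u] pC[of u] by auto
    thus ?thesis
    proof
      assume "m = 0" thus ?thesis using Du by simp
    next
      assume "u \<bullet> (B *v u) = 0 \<and> u \<bullet> (C *v u) = 0"
      hence "B *v u = 0" "C *v u = 0" using psd_kernel[OF sB pB] psd_kernel[OF sC pC] by auto
      thus ?thesis by (simp add: D_def matrix_vector_mult_diff_rdistrib)
    qed
  qed
  have "D = opV V (\<lambda>_. 0)" using V(1) by (rule opV_eq) (simp add: ev0)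
  hence "D = 0" by (simp add: matrix_eq opV_apply)
  thus ?thesis by (simp add: D_def)
qed

lemma psd_sqrt_eq: "psd_mat B \<Longrightarrow> B ** B = A \<Longrightarrow> psd_sqrt A = B"
  unfolding psd_sqrt_def using psd_sqrt_unique by (intro the_equality) auto

lemma scal_lo:
  fixes g e l :: real
  assumes "0 < g" "0 < e" "e * g \<le> 1" "(1 - e * g)\<^sup>2 / g \<le> l"
  shows "1 / g \<le> (l + 2 * e + sqrt (l * (l + 4 * e))) / 2"
proof -
  define z where "z = 1 / g"
  have z: "z > 0" "e \<le> z" using assms by (auto simp: z_def field_simps)
  have "(1 - e * g)\<^sup>2 / g = (z - e)\<^sup>2 / z" using assms(1) by (simp add: z_def field_simps power2_eq_square)
  hence lz: "(z - e)\<^sup>2 \<le> l * z" using assms(4) z by (simp add: pos_divide_le_eq)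
  have "0 \<le> l * z" using lz by (meson order_trans zero_le_power2)
  hence l0: "0 \<le> l" using z by (simp add: zero_le_mult_iff)
  show ?thesis
  proof (cases "2 * z - l - 2 * e \<le> 0")
    case True
    have "0 \<le> sqrt (l * (l + 4 * e))" using l0 assms(2) by simp
    hence "z \<le> (l + 2 * e + sqrt (l * (l + 4 * e))) / 2" using True by argo
    thus ?thesis by (simp add: z_def)
  next
    case False
    have "(2 * z - l - 2 * e)\<^sup>2 \<le> l * (l + 4 * e)" using lz by (simp add: power2_eq_square algebra_simps)
    hence "2 * z - l - 2 * e \<le> sqrt (l * (l + 4 * e))" using False
      by (metis real_le_rsqrt)
    hence "z \<le> (l + 2 * e + sqrt (l * (l + 4 * e))) / 2" by argo
    thus ?thesis by (simp add: z_def)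
  qed
qed

lemma scal_hi:
  fixes g e l :: real
  assumes "0 < g" "0 < e" "e * g \<le> 1" "0 \<le> l" "l \<le> (1 - e * g)\<^sup>2 / g"
  shows "(l + 2 * e + sqrt (l * (l + 4 * e))) / 2 \<le> 1 / g"
proof -
  define z where "z = 1 / g"
  have z: "z > 0" "e \<le> z" using assms by (auto simp: z_def field_simps)
  have "(1 - e * g)\<^sup>2 / g = (z - e)\<^sup>2 / z" using assms(1) by (simp add: z_def field_simps power2_eq_square)
  hence lz: "l * z \<le> (z - e)\<^sup>2" using assms(5) z by (simp add: pos_le_divide_eq)
  have "l * z + 2 * e * z \<le> 2 * z * z"
  proof -
    have "e * e \<le> z * z" using z assms(2) by (intro mult_mono) auto
    thus ?thesis using lz by (simp add: power2_eq_square algebra_simps)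
  qed
  hence pos: "0 \<le> 2 * z - l - 2 * e" using z by (smt (verit) distrib_right mult_le_cancel_right)
  have "l * (l + 4 * e) \<le> (2 * z - l - 2 * e)\<^sup>2" using lz by (simp add: power2_eq_square algebra_simps)
  hence "sqrt (l * (l + 4 * e)) \<le> 2 * z - l - 2 * e" using pos by (metis real_sqrt_le_iff real_sqrt_abs abs_of_nonneg)
  hence "(l + 2 * e + sqrt (l * (l + 4 * e))) / 2 \<le> z" by argo
  thus ?thesis by (simp add: z_def)
qed


lemma opV_bounds:
  assumes "ONB V" "\<And>v. v \<in> V \<Longrightarrow> lo \<le> g v \<and> g v \<le> hi"
  shows "lo * (x \<bullet> x) \<le> x \<bullet> (opV V g *v x) \<and> x \<bullet> (opV V g *v x) \<le> hi * (x \<bullet> x)"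
proof -
  have "lo * (x \<bullet> x) = (\<Sum>v\<in>V. lo * (v \<bullet> x)\<^sup>2)" using ONB_norm[OF assms(1)] by (simp add: sum_distrib_left)
  also have "\<dots> \<le> (\<Sum>v\<in>V. g v * (v \<bullet> x)\<^sup>2)" using assms(2) by (intro sum_mono mult_right_mono) auto
  finally have 1: "lo * (x \<bullet> x) \<le> x \<bullet> (opV V g *v x)" using opV_qf[OF assms(1)] by simp
  have "(\<Sum>v\<in>V. g v * (v \<bullet> x)\<^sup>2) \<le> (\<Sum>v\<in>V. hi * (v \<bullet> x)\<^sup>2)" using assms(2) by (intro sum_mono mult_right_mono) auto
  also have "\<dots> = hi * (x \<bullet> x)" using ONB_norm[OF assms(1)] by (simp add: sum_distrib_left)
  finally have 2: "x \<bullet> (opV V g *v x) \<le> hi * (x \<bullet> x)" using opV_qf[OF assms(1)] by simp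
  show ?thesis using 1 2 by simp
qed

lemma ONB_unit: "ONB V \<Longrightarrow> v \<in> V \<Longrightarrow> v \<bullet> v = 1"
  unfolding ONB_def by (simp add: norm_eq_1)

lemma eig_loewner:
  assumes "loewner_le A B" "A *v v = a *\<^sub>R v" "B *v v = b *\<^sub>R v" "v \<bullet> v = 1"
  shows "a \<le> b"
proof -
  have "0 \<le> v \<bullet> ((B - A) *v v)" using assms(1) unfolding loewner_le_def psd_mat_def by blast
  thus ?thesis using assms(2-4) by (simp add: matrix_vector_mult_diff_rdistrib inner_diff_right)
qed

theorem mainTheorem14:
  fixes \<gamma>0 \<gamma>1 \<eta> :: real and \<Sigma> S :: "real^'n^'n"
  assumes "0 < \<gamma>0" and "\<gamma>0 \<le> \<gamma>1"
    and "0 < \<eta>" and "\<eta> \<le> 1 / \<gamma>1"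
    and "pd_mat \<Sigma>"
    and "loewner_le (mat \<gamma>0) (matrix_inv \<Sigma>)"
    and "loewner_le (matrix_inv \<Sigma>) (mat \<gamma>1)"
    and "sym_mat S"
    and "loewner_le (mat \<gamma>0) S" and "loewner_le S (mat \<gamma>1)"
  shows "let \<Sigma>' = (mat 1 - \<eta> *\<^sub>R S) ** \<Sigma> ** (mat 1 - \<eta> *\<^sub>R S);
             \<Sigma>'' = (1/2) *\<^sub>R (\<Sigma>' + mat (2 * \<eta>) + psd_sqrt (\<Sigma>' ** (\<Sigma>' + mat (4 * \<eta>))))
         in loewner_le (mat (1 / \<gamma>1)) \<Sigma>'' \<and> loewner_le \<Sigma>'' (mat (1 / \<gamma>0))"
proof -
  note g0 = assms(1) and g01 = assms(2) and e0 = assms(3)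
  have g1: "0 < \<gamma>1" using g0 g01 by simp
  have eg1: "\<eta> * \<gamma>1 \<le> 1" using assms(4) g1 by (simp add: field_simps)
  have eg0: "\<eta> * \<gamma>0 \<le> 1" using eg1 g01 e0 by (smt (verit) mult_left_mono)
  have sSig: "sym_mat \<Sigma>" and pSig: "\<And>x. x \<noteq> 0 \<Longrightarrow> 0 < x \<bullet> (\<Sigma> *v x)"
    using assms(5) unfolding pd_mat_def by auto
  have "\<forall>x. \<Sigma> *v x = 0 \<longrightarrow> x = 0" using pSig by force
  hence "invertible \<Sigma>" using matrix_left_invertible_ker invertible_left_inverse by blast
  hence "\<exists>A'. \<Sigma> ** A' = mat 1 \<and> A' ** \<Sigma> = mat 1" unfolding invertible_def .
  hence invS: "matrix_inv \<Sigma> ** \<Sigma> = mat 1" unfolding matrix_inv_def by (rule someI2_ex) blast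
  obtain V1 where V1: "ONB V1" "\<forall>v\<in>V1. \<Sigma> *v v = (v \<bullet> (\<Sigma> *v v)) *\<^sub>R v" using spectral[OF sSig] by blast
  have sig_b: "1/\<gamma>1 \<le> v \<bullet> (\<Sigma> *v v) \<and> v \<bullet> (\<Sigma> *v v) \<le> 1/\<gamma>0" if v: "v \<in> V1" for v
  proof -
    define s where "s = v \<bullet> (\<Sigma> *v v)"
    have vv: "v \<bullet> v = 1" by (rule ONB_unit[OF V1(1) v])
    hence "v \<noteq> 0" by auto
    hence s0: "s > 0" using pSig s_def by simp
    have Sv: "\<Sigma> *v v = s *\<^sub>R v" using V1 v s_def by simp
    have "v = matrix_inv \<Sigma> *v (\<Sigma> *v v)" by (simp add: matrix_vector_mul_assoc invS)
    hence "v = s *\<^sub>R (matrix_inv \<Sigma> *v v)" by (simp add: Sv matrix_vector_mult_scaleR)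
    hence "(1/s) *\<^sub>R v = ((1/s) * s) *\<^sub>R (matrix_inv \<Sigma> *v v)" by (metis scaleR_scaleR)
    hence Iv: "matrix_inv \<Sigma> *v v = (1/s) *\<^sub>R v" using s0 by simp
    have "\<gamma>0 \<le> 1/s" by (rule eig_loewner[OF assms(6) mat_vec Iv vv])
    moreover have "1/s \<le> \<gamma>1" by (rule eig_loewner[OF assms(7) Iv mat_vec vv])
    ultimately show ?thesis using s0 g0 g1 unfolding s_def[symmetric] by (simp add: field_simps)
  qed
  have SigV: "\<Sigma> = opV V1 (\<lambda>v. v \<bullet> (\<Sigma> *v v))" using V1 by (intro opV_eq) auto
  have Sig_qf: "(1/\<gamma>1) * (y \<bullet> y) \<le> y \<bullet> (\<Sigma> *v y) \<and> y \<bullet> (\<Sigma> *v y) \<le> (1/\<gamma>0) * (y \<bullet> y)" for y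
    using opV_bounds[OF V1(1), of "1/\<gamma>1" "\<lambda>v. v \<bullet> (\<Sigma> *v v)" "1/\<gamma>0" y] sig_b SigV by simp
  obtain V2 where V2: "ONB V2" "\<forall>v\<in>V2. S *v v = (v \<bullet> (S *v v)) *\<^sub>R v" using spectral[OF assms(8)] by blast
  define P where "P = mat 1 - \<eta> *\<^sub>R S"
  have s_b: "\<gamma>0 \<le> v \<bullet> (S *v v) \<and> v \<bullet> (S *v v) \<le> \<gamma>1" if v: "v \<in> V2" for v
  proof -
    have vv: "v \<bullet> v = 1" by (rule ONB_unit[OF V2(1) v])
    have Sv: "S *v v = (v \<bullet> (S *v v)) *\<^sub>R v" using V2 v by simp
    show ?thesis using eig_loewner[OF assms(9) mat_vec Sv vv] eig_loewner[OF assms(10) Sv mat_vec vv] by simp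
  qed
  have PV: "P = opV V2 (\<lambda>v. 1 - \<eta> * (v \<bullet> (S *v v)))"
  proof (rule opV_eq[OF V2(1)])
    fix u assume "u \<in> V2"
    define c where "c = u \<bullet> (S *v u)"
    have "S *v u = c *\<^sub>R u" using V2 \<open>u \<in> V2\<close> c_def by simp
    thus "P *v u = (1 - \<eta> * (u \<bullet> (S *v u))) *\<^sub>R u" unfolding c_def[symmetric]
      by (simp add: P_def matrix_vector_mult_diff_rdistrib scaleR_matrix_vector_assoc[symmetric] algebra_simps)
  qed
  have sP: "sym_mat P" using PV opV_sym by simp
  have PP: "P ** P = opV V2 (\<lambda>v. (1 - \<eta> * (v \<bullet> (S *v v)))\<^sup>2)" using PV opV_mult[OF V2(1)] by (simp add: power2_eq_square)
  have p_b: "(1 - \<eta> * \<gamma>1)\<^sup>2 \<le> (1 - \<eta> * (v \<bullet> (S *v v)))\<^sup>2 \<and> (1 - \<eta> * (v \<bullet> (S *v v)))\<^sup>2 \<le> (1 - \<eta> * \<gamma>0)\<^sup>2"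
    if "v \<in> V2" for v
  proof -
    have "\<eta> * \<gamma>0 \<le> \<eta> * (v \<bullet> (S *v v))" "\<eta> * (v \<bullet> (S *v v)) \<le> \<eta> * \<gamma>1"
      using s_b[OF that] e0 by (auto intro: mult_left_mono)
    thus ?thesis using eg1 by (intro conjI power_mono) auto
  qed
  have Pn: "(1 - \<eta> * \<gamma>1)\<^sup>2 * (x \<bullet> x) \<le> (P *v x) \<bullet> (P *v x) \<and> (P *v x) \<bullet> (P *v x) \<le> (1 - \<eta> * \<gamma>0)\<^sup>2 * (x \<bullet> x)" for x
  proof -
    have "(P *v x) \<bullet> (P *v x) = x \<bullet> ((P ** P) *v x)" using sym_dot[OF sP, of x "P *v x"] by (simp add: matrix_vector_mul_assoc)
    thus ?thesis using opV_bounds[OF V2(1), of "(1 - \<eta> * \<gamma>1)\<^sup>2" _ "(1 - \<eta> * \<gamma>0)\<^sup>2" x] p_b PP by simp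
  qed
  define X where "X = P ** \<Sigma> ** P"
  have Xv: "X *v x = P *v (\<Sigma> *v (P *v x))" for x by (simp add: X_def matrix_vector_mul_assoc[symmetric])
  have Xqf: "x \<bullet> (X *v x) = (P *v x) \<bullet> (\<Sigma> *v (P *v x))" for x unfolding Xv by (rule sym_dot[OF sP])
  have sX: "sym_mat X"
  proof (rule sym_matI)
    fix x y :: "real^'n"
    have "x \<bullet> (X *v y) = (P *v x) \<bullet> (\<Sigma> *v (P *v y))" unfolding Xv by (rule sym_dot[OF sP])
    also have "\<dots> = (\<Sigma> *v (P *v x)) \<bullet> (P *v y)" by (rule sym_dot[OF sSig])
    also have "\<dots> = (P *v (\<Sigma> *v (P *v x))) \<bullet> y" by (metis sym_dot[OF sP] inner_commute)
    finally show "x \<bullet> (X *v y) = (X *v x) \<bullet> y" unfolding Xv .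
  qed
  define a where "a = (1 - \<eta> * \<gamma>1)\<^sup>2 / \<gamma>1"
  define b where "b = (1 - \<eta> * \<gamma>0)\<^sup>2 / \<gamma>0"
  have Xb: "a * (x \<bullet> x) \<le> x \<bullet> (X *v x) \<and> x \<bullet> (X *v x) \<le> b * (x \<bullet> x)" for x
  proof -
    let ?y = "P *v x"
    have "a * (x \<bullet> x) = (1/\<gamma>1) * ((1 - \<eta> * \<gamma>1)\<^sup>2 * (x \<bullet> x))" by (simp add: a_def)
    also have "\<dots> \<le> (1/\<gamma>1) * (?y \<bullet> ?y)" using Pn[of x] g1 by (intro mult_left_mono) auto
    also have "\<dots> \<le> x \<bullet> (X *v x)" using Sig_qf[of ?y] Xqf by simp
    finally have 1: "a * (x \<bullet> x) \<le> x \<bullet> (X *v x)" .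
    have "x \<bullet> (X *v x) \<le> (1/\<gamma>0) * (?y \<bullet> ?y)" using Sig_qf[of ?y] Xqf by simp
    also have "\<dots> \<le> (1/\<gamma>0) * ((1 - \<eta> * \<gamma>0)\<^sup>2 * (x \<bullet> x))" using Pn[of x] g0 by (intro mult_left_mono) auto
    also have "\<dots> = b * (x \<bullet> x)" by (simp add: b_def)
    finally show ?thesis using 1 by simp
  qed
  obtain V where V: "ONB V" "\<forall>v\<in>V. X *v v = (v \<bullet> (X *v v)) *\<^sub>R v" using spectral[OF sX] by blast
  define lam where "lam v = v \<bullet> (X *v v)" for v
  have Xe: "X *v v = lam v *\<^sub>R v" if "v \<in> V" for v using V that lam_def by simp
  have lb: "a \<le> lam v \<and> lam v \<le> b" if "v \<in> V" for v
    using Xb[of v] ONB_unit[OF V(1) that] lam_def by simp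
  have a0: "0 \<le> a" unfolding a_def using g1 by simp
  define Bm where "Bm = opV V (\<lambda>v. sqrt (lam v * (lam v + 4 * \<eta>)))"
  have nn: "0 \<le> lam v * (lam v + 4 * \<eta>)" if "v \<in> V" for v using lb[OF that] a0 e0 by simp
  have pB: "psd_mat Bm" unfolding Bm_def by (rule opV_psd[OF V(1)]) (simp add: nn)
  have "X ** (X + mat (4 * \<eta>)) = opV V (\<lambda>v. lam v * (lam v + 4 * \<eta>))"
  proof (rule opV_eq[OF V(1)])
    fix u assume u: "u \<in> V"
    have "(X ** (X + mat (4 * \<eta>))) *v u = X *v ((X + mat (4 * \<eta>)) *v u)"
      by (simp add: matrix_vector_mul_assoc)
    also have "(X + mat (4 * \<eta>)) *v u = (lam u + 4 * \<eta>) *\<^sub>R u"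
      by (simp add: matrix_vector_mult_add_rdistrib mat_vec Xe[OF u] scaleR_add_left)
    also have "X *v ((lam u + 4 * \<eta>) *\<^sub>R u) = (lam u + 4 * \<eta>) *\<^sub>R (lam u *\<^sub>R u)"
      by (simp only: matrix_vector_mult_scaleR Xe[OF u])
    also have "\<dots> = (lam u * (lam u + 4 * \<eta>)) *\<^sub>R u" by (simp add: mult.commute)
    finally show "(X ** (X + mat (4 * \<eta>))) *v u = (lam u * (lam u + 4 * \<eta>)) *\<^sub>R u" .
  qed
  also have "\<dots> = Bm ** Bm"
  proof -
    have "Bm ** Bm = opV V (\<lambda>v. sqrt (lam v * (lam v + 4 * \<eta>)) * sqrt (lam v * (lam v + 4 * \<eta>)))"
      unfolding Bm_def by (rule opV_mult[OF V(1)])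
    also have "\<dots> = opV V (\<lambda>v. lam v * (lam v + 4 * \<eta>))"
      by (rule opV_eq[OF V(1)]) (simp add: opV_vec[OF V(1)] nn)
    finally show ?thesis by simp
  qed
  finally have sqrtB: "psd_sqrt (X ** (X + mat (4 * \<eta>))) = Bm" using psd_sqrt_eq[OF pB] by simp
  define f where "f l = (l + 2 * \<eta> + sqrt (l * (l + 4 * \<eta>))) / 2" for l
  define T where "T = (1/2) *\<^sub>R (X + mat (2 * \<eta>) + Bm)"
  have Te: "T *v u = f (lam u) *\<^sub>R u" if u: "u \<in> V" for u
    using u by (simp add: T_def scaleR_matrix_vector_assoc[symmetric] matrix_vector_mult_add_rdistrib mat_vec Xe
        Bm_def opV_vec[OF V(1)] f_def scaleR_add_left[symmetric] add_divide_distrib)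
  have D1: "T - mat (1/\<gamma>1) = opV V (\<lambda>v. f (lam v) - 1/\<gamma>1)"
    by (rule opV_eq[OF V(1)]) (simp add: matrix_vector_mult_diff_rdistrib Te mat_vec scaleR_diff_left)
  have D2: "mat (1/\<gamma>0) - T = opV V (\<lambda>v. 1/\<gamma>0 - f (lam v))"
    by (rule opV_eq[OF V(1)]) (simp add: matrix_vector_mult_diff_rdistrib Te mat_vec scaleR_diff_left)
  have L1: "loewner_le (mat (1/\<gamma>1)) T" unfolding loewner_le_def D1
  proof (rule opV_psd[OF V(1)])
    fix v assume "v \<in> V"
    hence "a \<le> lam v" using lb by blast
    hence "1/\<gamma>1 \<le> f (lam v)" unfolding f_def a_def by (rule scal_lo[OF g1 e0 eg1])
    thus "0 \<le> f (lam v) - 1/\<gamma>1" by simp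
  qed
  have L2: "loewner_le T (mat (1/\<gamma>0))" unfolding loewner_le_def D2
  proof (rule opV_psd[OF V(1)])
    fix v assume "v \<in> V"
    hence "a \<le> lam v" "lam v \<le> b" using lb by auto
    hence "0 \<le> lam v" "lam v \<le> b" using a0 by auto
    hence "f (lam v) \<le> 1/\<gamma>0" unfolding f_def b_def by (rule scal_hi[OF g0 e0 eg0])
    thus "0 \<le> 1/\<gamma>0 - f (lam v)" by simp
  qed
  show ?thesis unfolding Let_def P_def[symmetric] X_def[symmetric] sqrtB T_def[symmetric] using L1 L2 by simp
qed

end
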